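(* Let $b,c_1,c_2$ be positive integers and let $N=b+c_1+c_2$. Let $R$ be the map that takes a tableau $T\in\mathrm{SET}(\mathcal{L}^{c_1,c_2}_b)$, replaces each entry $i$ by $N+1-i$, and rotates the result by 180 degrees. Then $R$ is a poset isomorphism from $\mathrm{SET}$ of the right lobster $\mathcal{L}^{c_1,c_2}_b$ (associated to the triple $(b,c_1,c_2)$) to $\mathrm{SET}$ of the left lobster associated to the triple $(b,c_2,c_1)$.
   Context: Rows of skew diagrams are numbered from the bottom. For positive integers $b,c_1,c_2$, the right lobster $\mathcal{L}^{c_1,c_2}_b$ is the skew diagram $\alpha/\beta$ with $\alpha=(b+1+c_2,b+1,b+1+c_1)$, $\beta=(b+1,1,b+1)$: a bottom row of $c_2$ cells in columns $b+2,\ldots,b+1+c_2$, a middle row (body) of $b$ cells in columns $2,\ldots,b+1$, and a top row of $c_1$ cells in columns $b+2,\ldots,b+1+c_1$. The left lobster associated to a triple $(b,c_1,c_2)$ is the three-row skew diagram whose top row has $c_1$ cells and bottom row has $c_2$ cells, both right-justified ending in a common column $m$ (with $m=\max(c_1,c_2)$), and whose middle row (body) has $b$ cells in columns $m+1,\ldots,m+b$; it is the 180-degree rotation of the right lobster with top row $c_2$ and bottom row $c_1$. $\mathrm{SET}$ of a skew shape with $N$ cells is the set of bijective fillings with $1,\ldots,N$ whose rows increase left to right and columns increase bottom to top. For $1\le i\le N-1$, $\pi_i(T)=T$ if $i+1$ is in a strictly higher row than $i$, $\pi_i(T)=s_i(T)$ (swap $i$ and $i+1$) if $i+1$ is in a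 strictly lower row than $i$, and $\pi_i(T)=0$ otherwise; the poset order is $T\le T'$ iff $T'$ is obtained from $T$ by a sequence of operators $\pi_i$ (all intermediate results nonzero). *)

theory Defs
  imports Main
begin

text \<open>Cells are pairs (row, column); rows are numbered from the bottom (row 1 is the bottom row).
A tableau is a function from cells to entries, which is 0 outside the shape.\<close>

type_synonym cell = "nat \<times> nat"
type_synonym tableau = "cell \<Rightarrow> nat"

definition SET :: "cell set \<Rightarrow> tableau set" where
  "SET D = {T. bij_betw T D {1..card D} \<and> (\<forall>x. x \<notin> D \<longrightarrow> T x = 0)
     \<and> (\<forall>r c c'. (r, c) \<in> D \<and> (r, c') \<in> D \<and> c < c' \<longrightarrow> T (r, c) < T (r, c'))
     \<and> (\<forall>r r' c. (r, c) \<in> D \<and> (r', c) \<in> D \<and> r < r' \<longrightarrow> T (r, c) < T (r', c))}"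

definition right_lobster :: "nat \<Rightarrow> nat \<Rightarrow> nat \<Rightarrow> cell set" where
  "right_lobster b c1 c2 =
     {(1, c) | c. b + 2 \<le> c \<and> c \<le> b + 1 + c2}
   \<union> {(2, c) | c. 2 \<le> c \<and> c \<le> b + 1}
   \<union> {(3, c) | c. b + 2 \<le> c \<and> c \<le> b + 1 + c1}"

text \<open>Left lobster for the triple (b,c1,c2): top row c1 cells and bottom row c2 cells, both
right-justified ending in column m = max c1 c2; middle row b cells in columns m+1..m+b.\<close>
definition left_lobster :: "nat \<Rightarrow> nat \<Rightarrow> nat \<Rightarrow> cell set" where
  "left_lobster b c1 c2 = (let m = max c1 c2 in
     {(1, c) | c. m + 1 \<le> c + c2 \<and> c \<le> m}
   \<union> {(2, c) | c. m + 1 \<le> c \<and> c \<le> m + b}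
   \<union> {(3, c) | c. m + 1 \<le> c + c1 \<and> c \<le> m})"

definition swap_entries :: "nat \<Rightarrow> tableau \<Rightarrow> tableau" where
  "swap_entries i T = (\<lambda>x. if T x = i then Suc i else if T x = Suc i then i else T x)"

text \<open>The operator pi_i on SET D; None represents the result 0.\<close>
definition pi_op :: "cell set \<Rightarrow> nat \<Rightarrow> tableau \<Rightarrow> tableau option" where
  "pi_op D i T = (let x = inv_into D T i; y = inv_into D T (Suc i) in
     if fst x < fst y then Some T
     else if fst y < fst x then Some (swap_entries i T)
     else None)"

definition pi_step :: "cell set \<Rightarrow> tableau \<Rightarrow> tableau \<Rightarrow> bool" where
  "pi_step D T T' \<longleftrightarrow> T \<in> SET D \<and> (\<exists>i. 1 \<le> i \<and> i < card D \<and> pi_op D i T = Some T')"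

definition SET_le :: "cell set \<Rightarrow> tableau \<Rightarrow> tableau \<Rightarrow> bool" where
  "SET_le D = (pi_step D)\<^sup>*\<^sup>*"

text \<open>The map R: replace each entry i by N+1-i and rotate by 180 degrees. The rotation sends
cell (r,c) of the right lobster to (4-r, b+m+2-c) with m = max c1 c2.\<close>
definition R_map :: "nat \<Rightarrow> nat \<Rightarrow> nat \<Rightarrow> tableau \<Rightarrow> tableau" where
  "R_map b c1 c2 T = (\<lambda>(r, c).
     if (r, c) \<in> left_lobster b c2 c1
     then b + c1 + c2 + 1 - T (4 - r, b + max c1 c2 + 2 - c) else 0)"

end

theory Submission
  imports Defs
begin
definition Rg :: "cell set \<Rightarrow> (cell \<Rightarrow> cell) \<Rightarrow> nat \<Rightarrow> tableau \<Rightarrow> tableau" where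
  "Rg D' f N T = (\<lambda>x. if x \<in> D' then N + 1 - T (f x) else 0)"

definition good :: "cell set \<Rightarrow> cell set \<Rightarrow> (cell \<Rightarrow> cell) \<Rightarrow> (cell \<Rightarrow> cell) \<Rightarrow> bool" where
  "good D D' f g \<longleftrightarrow> finite D \<and> (\<forall>x\<in>D'. f x \<in> D \<and> g (f x) = x) \<and> (\<forall>y\<in>D. g y \<in> D' \<and> f (g y) = y)
    \<and> (\<forall>x\<in>D'. \<forall>y\<in>D'. (fst x < fst y \<longleftrightarrow> fst (f y) < fst (f x)) \<and> (snd x < snd y \<longleftrightarrow> snd (f y) < snd (f x)))
    \<and> (\<forall>x\<in>D. \<forall>y\<in>D. (fst x < fst y \<longleftrightarrow> fst (g y) < fst (g x)) \<and> (snd x < snd y \<longleftrightarrow> snd (g y) < snd (g x)))"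

lemma good_fD: "good D D' f g \<Longrightarrow> x \<in> D' \<Longrightarrow> f x \<in> D"
  unfolding good_def by blast
lemma good_gD: "good D D' f g \<Longrightarrow> y \<in> D \<Longrightarrow> g y \<in> D'"
  unfolding good_def by blast
lemma good_gf: "good D D' f g \<Longrightarrow> x \<in> D' \<Longrightarrow> g (f x) = x"
  unfolding good_def by blast
lemma good_fg: "good D D' f g \<Longrightarrow> y \<in> D \<Longrightarrow> f (g y) = y"
  unfolding good_def by blast
lemma good_lt: "good D D' f g \<Longrightarrow> x \<in> D' \<Longrightarrow> y \<in> D' \<Longrightarrow>
   (fst x < fst y \<longleftrightarrow> fst (f y) < fst (f x)) \<and> (snd x < snd y \<longleftrightarrow> snd (f y) < snd (f x))"
  unfolding good_def by blast
lemma good_lt': "good D D' f g \<Longrightarrow> x \<in> D \<Longrightarrow> y \<in> D \<Longrightarrow>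
   (fst x < fst y \<longleftrightarrow> fst (g y) < fst (g x)) \<and> (snd x < snd y \<longleftrightarrow> snd (g y) < snd (g x))"
  unfolding good_def by blast

lemma good_sym: "good D D' f g \<Longrightarrow> good D' D g f"
proof -
  assume a: "good D D' f g"
  have "D' = g ` D" using good_gD[OF a] good_fD[OF a] good_gf[OF a] by force
  moreover have "finite D" using a unfolding good_def by blast
  ultimately have "finite D'" by simp
  thus ?thesis using a unfolding good_def by blast
qed

lemma good_bij: "good D D' f g \<Longrightarrow> bij_betw f D' D"
  by (rule bij_betw_byWitness[where f'=g]) (auto simp: good_fD good_gD good_gf good_fg)

lemma good_card: "good D D' f g \<Longrightarrow> card D' = card D"
  using good_bij bij_betw_same_card by blast

lemma good_eq: "good D D' f g \<Longrightarrow> x \<in> D' \<Longrightarrow> y \<in> D' \<Longrightarrow>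
   (fst x = fst y \<longleftrightarrow> fst (f x) = fst (f y)) \<and> (snd x = snd y \<longleftrightarrow> snd (f x) = snd (f y))"
  using good_lt[of D D' f g x y] good_lt[of D D' f g y x] by (metis linorder_neqE_nat less_irrefl)

lemma SET_iff: "T \<in> SET D \<longleftrightarrow> bij_betw T D {1..card D} \<and> (\<forall>x. x \<notin> D \<longrightarrow> T x = 0)
   \<and> (\<forall>a\<in>D. \<forall>a'\<in>D. fst a = fst a' \<and> snd a < snd a' \<longrightarrow> T a < T a')
   \<and> (\<forall>a\<in>D. \<forall>a'\<in>D. snd a = snd a' \<and> fst a < fst a' \<longrightarrow> T a < T a')"
proof -
  have r: "(\<forall>r c c'. (r, c) \<in> D \<and> (r, c') \<in> D \<and> c < c' \<longrightarrow> T (r, c) < T (r, c'))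
     \<longleftrightarrow> (\<forall>a\<in>D. \<forall>a'\<in>D. fst a = fst a' \<and> snd a < snd a' \<longrightarrow> T a < T a')"
    by (metis prod.collapse fst_conv snd_conv)
  have c: "(\<forall>r r' c. (r, c) \<in> D \<and> (r', c) \<in> D \<and> r < r' \<longrightarrow> T (r, c) < T (r', c))
     \<longleftrightarrow> (\<forall>a\<in>D. \<forall>a'\<in>D. snd a = snd a' \<and> fst a < fst a' \<longrightarrow> T a < T a')"
    by (metis prod.collapse fst_conv snd_conv)
  show ?thesis unfolding SET_def mem_Collect_eq r c ..
qed

lemma SET_range: "T \<in> SET D \<Longrightarrow> a \<in> D \<Longrightarrow> T a \<in> {1..card D}"
  unfolding SET_def using bij_betwE by blast

lemma Rg_SET:
  assumes g: "good D D' f g" and T: "T \<in> SET D"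
  shows "Rg D' f (card D) T \<in> SET D'"
proof -
  let ?N = "card D"
  let ?S = "Rg D' f ?N T"
  have b1: "bij_betw f D' D" using good_bij[OF g] .
  have b2: "bij_betw T D {1..?N}" using T unfolding SET_def by auto
  have b3: "bij_betw (\<lambda>v. ?N + 1 - v) {1..?N} {1..?N}"
    by (rule bij_betw_byWitness[where f'="\<lambda>v. ?N + 1 - v"]) auto
  have "bij_betw ((\<lambda>v. ?N + 1 - v) \<circ> T \<circ> f) D' {1..?N}"
    using bij_betw_trans[OF bij_betw_trans[OF b1 b2] b3] by (simp add: comp_assoc)
  hence "bij_betw ?S D' {1..?N}"
    by (rule bij_betw_cong[THEN iffD1, rotated]) (simp add: Rg_def)
  hence bij: "bij_betw ?S D' {1..card D'}" using good_card[OF g] by simp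
  have fD: "\<And>x. x \<in> D' \<Longrightarrow> f x \<in> D" using good_fD[OF g] .
  have row: "?S a < ?S a'" if "a \<in> D'" "a' \<in> D'" "fst a = fst a'" "snd a < snd a'" for a a'
  proof -
    have "fst (f a') = fst (f a)" using good_eq[OF g that(1,2)] that by simp
    moreover have "snd (f a') < snd (f a)" using good_lt[OF g that(1,2)] that by simp
    ultimately have "T (f a') < T (f a)" using T fD[OF that(1)] fD[OF that(2)] unfolding SET_iff by blast
    moreover have "T (f a) \<le> ?N" using SET_range[OF T fD[OF that(1)]] by auto
    ultimately show ?thesis using that by (simp add: Rg_def)
  qed
  have col: "?S a < ?S a'" if "a \<in> D'" "a' \<in> D'" "snd a = snd a'" "fst a < fst a'" for a a'
  proof -
    have "snd (f a') = snd (f a)" using good_eq[OF g that(1,2)] that by simp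
    moreover have "fst (f a') < fst (f a)" using good_lt[OF g that(1,2)] that by simp
    ultimately have "T (f a') < T (f a)" using T fD[OF that(1)] fD[OF that(2)] unfolding SET_iff by blast
    moreover have "T (f a) \<le> ?N" using SET_range[OF T fD[OF that(1)]] by auto
    ultimately show ?thesis using that by (simp add: Rg_def)
  qed
  show ?thesis unfolding SET_iff using bij row col by (auto simp: Rg_def)
qed

lemma Rg_inv:
  assumes g: "good D D' f g" and T: "T \<in> SET D"
  shows "Rg D g (card D) (Rg D' f (card D) T) = T"
proof
  fix y
  show "Rg D g (card D) (Rg D' f (card D) T) y = T y"
  proof (cases "y \<in> D")
    case True
    hence "g y \<in> D'" "f (g y) = y" using good_gD[OF g] good_fg[OF g] by auto
    moreover have "T y \<in> {1..card D}" using SET_range[OF T True] .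
    ultimately show ?thesis using True by (auto simp: Rg_def)
  next
    case False
    hence "T y = 0" using T unfolding SET_iff by blast
    thus ?thesis using False by (simp add: Rg_def)
  qed
qed

lemma Rg_swap:
  assumes T: "T \<in> SET D" and D': "\<forall>x\<in>D'. f x \<in> D" and i: "1 \<le> i" "i < card D"
  shows "Rg D' f (card D) (swap_entries i T) = swap_entries (card D - i) (Rg D' f (card D) T)"
proof
  fix x
  show "Rg D' f (card D) (swap_entries i T) x = swap_entries (card D - i) (Rg D' f (card D) T) x"
  proof (cases "x \<in> D'")
    case True
    hence "T (f x) \<in> {1..card D}" using SET_range[OF T] D' by auto
    thus ?thesis using True i by (auto simp: Rg_def swap_entries_def)
  next
    case False
    thus ?thesis using i by (auto simp: Rg_def swap_entries_def)
  qed
qed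

lemma Rg_pi:
  assumes g: "good D D' f g" and T: "T \<in> SET D" and i: "1 \<le> i" "i < card D"
  shows "pi_op D' (card D - i) (Rg D' f (card D) T) = map_option (Rg D' f (card D)) (pi_op D i T)"
proof -
  let ?N = "card D"
  let ?S = "Rg D' f ?N T"
  have bT: "bij_betw T D {1..?N}" using T unfolding SET_def by auto
  have bS: "bij_betw ?S D' {1..?N}" using Rg_SET[OF g T] good_card[OF g] unfolding SET_def by auto
  define c where "c k = inv_into D T k" for k
  have c: "c k \<in> D" "T (c k) = k" if "k \<in> {1..?N}" for k
    using that bT unfolding c_def
    by (auto simp: bij_betw_def inv_into_into f_inv_into_f)
  have inv: "inv_into D' ?S j = g (c (?N + 1 - j))" if "j \<in> {1..?N}" for j
  proof (rule inv_into_f_eq)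
    show "inj_on ?S D'" using bS bij_betw_def by blast
    have k: "?N + 1 - j \<in> {1..?N}" using that by auto
    show "g (c (?N + 1 - j)) \<in> D'" using c(1)[OF k] good_gD[OF g] by blast
    moreover have "f (g (c (?N + 1 - j))) = c (?N + 1 - j)" using c(1)[OF k] good_fg[OF g] by blast
    ultimately show "?S (g (c (?N + 1 - j))) = j" using c(2)[OF k] that by (auto simp: Rg_def)
  qed
  have e1: "inv_into D' ?S (?N - i) = g (c (Suc i))" using inv[of "?N - i"] i
    by (simp add: Suc_diff_le)
  have e2: "inv_into D' ?S (Suc (?N - i)) = g (c i)" using inv[of "Suc (?N - i)"] i by simp
  have ci: "c i \<in> D" "c (Suc i) \<in> D" using c i by auto
  have gl: "fst (g a) < fst (g b) \<longleftrightarrow> fst b < fst a" if "a \<in> D" "b \<in> D" for a b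
    using good_lt'[OF g that(2,1)] by blast
  have sw: "Rg D' f ?N (swap_entries i T) = swap_entries (?N - i) ?S"
    using Rg_swap[OF T _ i] good_fD[OF g] by blast
  show ?thesis
    unfolding pi_op_def Let_def e1 e2 c_def[symmetric]
    using gl[OF ci(1) ci(2)] gl[OF ci(2) ci(1)] sw by simp
qed

lemma transfer:
  assumes g: "good D D' f g" and le: "SET_le D T T'"
  shows "SET_le D' (Rg D' f (card D) T) (Rg D' f (card D) T')"
  using le unfolding SET_le_def
proof (induction rule: rtranclp_induct)
  case base
  then show ?case by simp
next
  case (step U U')
  from step.hyps(2) obtain i where U: "U \<in> SET D" and i: "1 \<le> i" "i < card D"
    and p: "pi_op D i U = Some U'" unfolding pi_step_def by auto
  have "pi_step D' (Rg D' f (card D) U) (Rg D' f (card D) U')"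
    unfolding pi_step_def
  proof (intro conjI exI)
    show "Rg D' f (card D) U \<in> SET D'" using Rg_SET[OF g U] .
    show "1 \<le> card D - i" "card D - i < card D'" using i good_card[OF g] by auto
    show "pi_op D' (card D - i) (Rg D' f (card D) U) = Some (Rg D' f (card D) U')"
      using Rg_pi[OF g U i] p by simp
  qed
  with step.IH show ?case by (metis rtranclp.rtrancl_into_rtrancl)
qed

lemma main_generic:
  assumes g: "good D D' f g"
  shows "bij_betw (Rg D' f (card D)) (SET D) (SET D')
     \<and> (\<forall>T \<in> SET D. \<forall>T' \<in> SET D. SET_le D T T' \<longleftrightarrow> SET_le D' (Rg D' f (card D) T) (Rg D' f (card D) T'))"
proof -
  have g': "good D' D g f" using good_sym[OF g] .
  have cd: "card D' = card D" using good_card[OF g] .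
  have inv1: "\<And>T. T \<in> SET D \<Longrightarrow> Rg D g (card D) (Rg D' f (card D) T) = T" using Rg_inv[OF g] .
  have inv2: "\<And>S. S \<in> SET D' \<Longrightarrow> Rg D' f (card D) (Rg D g (card D) S) = S" using Rg_inv[OF g'] cd by simp
  have in1: "\<And>T. T \<in> SET D \<Longrightarrow> Rg D' f (card D) T \<in> SET D'" using Rg_SET[OF g] .
  have in2: "\<And>S. S \<in> SET D' \<Longrightarrow> Rg D g (card D) S \<in> SET D" using Rg_SET[OF g'] cd by simp
  have bij: "bij_betw (Rg D' f (card D)) (SET D) (SET D')"
    by (rule bij_betw_byWitness[where f'="Rg D g (card D)"]) (use inv1 inv2 in1 in2 in auto)
  have le: "SET_le D T T' \<longleftrightarrow> SET_le D' (Rg D' f (card D) T) (Rg D' f (card D) T')"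
    if "T \<in> SET D" "T' \<in> SET D" for T T'
  proof
    assume "SET_le D T T'" thus "SET_le D' (Rg D' f (card D) T) (Rg D' f (card D) T')" using transfer[OF g] by blast
  next
    assume "SET_le D' (Rg D' f (card D) T) (Rg D' f (card D) T')"
    hence "SET_le D (Rg D g (card D') (Rg D' f (card D) T)) (Rg D g (card D') (Rg D' f (card D) T'))"
      using transfer[OF g'] by blast
    thus "SET_le D T T'" using inv1 that cd by simp
  qed
  show ?thesis using bij le by blast
qed

lemma right_eq: "right_lobster b c1 c2 = ({1} \<times> {b+2..b+1+c2}) \<union> ({2} \<times> {2..b+1}) \<union> ({3} \<times> {b+2..b+1+c1})"
  unfolding right_lobster_def by auto

lemma card_right: "card (right_lobster b c1 c2) = b + c1 + c2"
proof -
  have "card (({1::nat} \<times> {b+2..b+1+c2}) \<union> ({2} \<times> {2..b+1}) \<union> ({3} \<times> {b+2..b+1+c1})) = c2 + b + c1"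
    by (subst card_Un_disjoint; auto simp: card_cartesian_product)+
  thus ?thesis by (simp add: right_eq)
qed

definition phi :: "nat \<Rightarrow> nat \<Rightarrow> nat \<Rightarrow> cell \<Rightarrow> cell" where
  "phi b c1 c2 = (\<lambda>(r, c). (4 - r, b + max c1 c2 + 2 - c))"

lemma good_conc: "good (right_lobster b c1 c2) (left_lobster b c2 c1) (phi b c1 c2) (phi b c1 c2)"
  unfolding good_def
proof (intro conjI)
  show "finite (right_lobster b c1 c2)" by (simp add: right_eq)
qed (auto simp: phi_def right_lobster_def left_lobster_def Let_def)

lemma R_eq: "R_map b c1 c2 = Rg (left_lobster b c2 c1) (phi b c1 c2) (card (right_lobster b c1 c2))"
  by (auto simp: fun_eq_iff R_map_def Rg_def phi_def card_right)

theorem lemma5p3: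
  fixes b c1 c2 :: nat
  assumes "0 < b" and "0 < c1" and "0 < c2"
  shows "bij_betw (R_map b c1 c2) (SET (right_lobster b c1 c2)) (SET (left_lobster b c2 c1))
     \<and> (\<forall>T \<in> SET (right_lobster b c1 c2). \<forall>T' \<in> SET (right_lobster b c1 c2).
          SET_le (right_lobster b c1 c2) T T' \<longleftrightarrow>
          SET_le (left_lobster b c2 c1) (R_map b c1 c2 T) (R_map b c1 c2 T'))"
  unfolding R_eq using main_generic[OF good_conc] .

end
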